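(* Let $\lambda$ be a regular cardinal, $(P,\le)$ a poset, $i\in\{1,2,3\}$, and let $f:\lambda\to P$ be a $\lambda$-sequence that converges to $x\in P$ with respect to the topology $\tau^\lambda_{O_i}(P)$. Then there exists an isotone and cofinal function $\hat h:\lambda\to\lambda$ such that the $\lambda$-sequence $f\circ\hat h$ O$_i$-converges to $x$.
   Context: A $\lambda$-sequence in $P$ is a function $f:\lambda\to P$, regarded as a net indexed by the well-ordered (directed) set $\lambda$. A function $h:\lambda\to\lambda$ is cofinal if its range is cofinal (unbounded) in $\lambda$, and isotone if $\alpha\le\beta$ implies $h(\alpha)\le h(\beta)$. For monotone nets, $y_\gamma\uparrow y$ means increasing with supremum $y$, $z_\gamma\downarrow y$ decreasing with infimum $y$; $[a,b]:=\{t:a\le t\le b\}$; directed/filtered sets are nonempty sets in which finite subsets have upper/lower bounds in the set. A net $(x_\gamma)_{\gamma\in\Gamma}$ O$_1$-converges to $x$ if there are nets $(y_\gamma)_{\gamma\in\Gamma}$, $(z_\gamma)_{\gamma\in\Gamma}$ with eventually $y_\gamma\le x_\gamma\le z_\gamma$, $y_\gamma\uparrow x$, $z_\gamma\downarrow x$; it O$_2$-converges to $x$ if there are directed $M$ and filtered $N$ with $\sup M=\inf N=x$ such that for every $(m,n)\in M\times N$ the net is eventually in $[m,n]$; it O$_3$-converges to $x$ if the same holds with $M,N$ arbitrary subsets with $\sup M=\inf N=x$. A subset $X\subseteq P$ is O$^\lambda_i$-closed if no $\lambda$-sequence in $X$ O$_i$-converges to a point outside $X$; these sets are the closed sets of a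 topology $\tau^\lambda_{O_i}(P)$. *)

theory Defs
  imports "HOL-Analysis.Analysis"
begin

text \<open>The cardinal lambda is represented by a well-ordered type 'l whose natural order
  relation is an (infinite, regular) cardinal in the sense of the BNF cardinal library.\<close>

definition lam_rel :: "('l::wellorder) rel" where
  "lam_rel = {(a, b). a \<le> b}"

definition regular_cardinal_type :: "('l::wellorder) itself \<Rightarrow> bool" where
  "regular_cardinal_type _ \<longleftrightarrow>
     card_order (lam_rel :: 'l rel) \<and> Cinfinite (lam_rel :: 'l rel) \<and> regularCard (lam_rel :: 'l rel)"

definition is_sup :: "('p::order) set \<Rightarrow> 'p \<Rightarrow> bool" where
  "is_sup S x \<longleftrightarrow> (\<forall>s\<in>S. s \<le> x) \<and> (\<forall>u. (\<forall>s\<in>S. s \<le> u) \<longrightarrow> x \<le> u)"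

definition is_inf :: "('p::order) set \<Rightarrow> 'p \<Rightarrow> bool" where
  "is_inf S x \<longleftrightarrow> (\<forall>s\<in>S. x \<le> s) \<and> (\<forall>u. (\<forall>s\<in>S. u \<le> s) \<longrightarrow> u \<le> x)"

definition directed_set :: "('p::order) set \<Rightarrow> bool" where
  "directed_set M \<longleftrightarrow> M \<noteq> {} \<and> (\<forall>F. finite F \<and> F \<subseteq> M \<longrightarrow> (\<exists>u\<in>M. \<forall>a\<in>F. a \<le> u))"

definition filtered_set :: "('p::order) set \<Rightarrow> bool" where
  "filtered_set N \<longleftrightarrow> N \<noteq> {} \<and> (\<forall>F. finite F \<and> F \<subseteq> N \<longrightarrow> (\<exists>l\<in>N. \<forall>a\<in>F. l \<le> a))"

definition O1_conv :: "('l::wellorder \<Rightarrow> 'p::order) \<Rightarrow> 'p \<Rightarrow> bool" where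
  "O1_conv f x \<longleftrightarrow> (\<exists>y z :: 'l \<Rightarrow> 'p.
      eventually (\<lambda>\<gamma>. y \<gamma> \<le> f \<gamma> \<and> f \<gamma> \<le> z \<gamma>) at_top
    \<and> mono y \<and> is_sup (range y) x
    \<and> antimono z \<and> is_inf (range z) x)"

definition O2_conv :: "('l::wellorder \<Rightarrow> 'p::order) \<Rightarrow> 'p \<Rightarrow> bool" where
  "O2_conv f x \<longleftrightarrow> (\<exists>M N. directed_set M \<and> filtered_set N \<and> is_sup M x \<and> is_inf N x
    \<and> (\<forall>m\<in>M. \<forall>n\<in>N. eventually (\<lambda>\<gamma>. m \<le> f \<gamma> \<and> f \<gamma> \<le> n) at_top))"

definition O3_conv :: "('l::wellorder \<Rightarrow> 'p::order) \<Rightarrow> 'p \<Rightarrow> bool" where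
  "O3_conv f x \<longleftrightarrow> (\<exists>M N. is_sup M x \<and> is_inf N x
    \<and> (\<forall>m\<in>M. \<forall>n\<in>N. eventually (\<lambda>\<gamma>. m \<le> f \<gamma> \<and> f \<gamma> \<le> n) at_top))"

definition O_conv :: "nat \<Rightarrow> ('l::wellorder \<Rightarrow> 'p::order) \<Rightarrow> 'p \<Rightarrow> bool" where
  "O_conv i f x = (if i = 1 then O1_conv f x else if i = 2 then O2_conv f x else O3_conv f x)"

definition O_lam_closed :: "nat \<Rightarrow> 'l::wellorder itself \<Rightarrow> ('p::order) set \<Rightarrow> bool" where
  "O_lam_closed i _ X \<longleftrightarrow> (\<forall>(f::'l \<Rightarrow> 'p) x. range f \<subseteq> X \<and> O_conv i f x \<longrightarrow> x \<in> X)"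

definition tau_O :: "nat \<Rightarrow> 'l::wellorder itself \<Rightarrow> ('p::order) topology" where
  "tau_O i L = topology (\<lambda>U. O_lam_closed i L (- U))"

end

theory Submission
  imports Defs
begin
unbundle cardinal_syntax

lemma lam_rel_field: "Field (lam_rel :: ('l::wellorder) rel) = UNIV"
  unfolding lam_rel_def Field_def by auto

lemma t4: "{a::'l::wellorder. a < b} \<union> {b} = {..b}" by auto

lemma bnd:
  assumes "regular_cardinal_type TYPE('l::wellorder)"
  shows "\<exists>u. \<forall>a\<le>(b::'l). c a \<le> (u::'l)" 
proof (rule ccontr)
  let ?r = "lam_rel :: 'l rel"
  assume nb: "\<not> ?thesis"
  have co: "Card_order ?r" and inf: "\<not> finite (Field ?r)" and reg: "regularCard ?r"
    using assms lam_rel_field unfolding regular_cardinal_type_def by (auto simp: cinfinite_def)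
  have us: "underS ?r b = {a. a < b}" unfolding underS_def lam_rel_def by auto
  have "|underS ?r b| <o ?r" using card_of_underS[OF co] lam_rel_field by auto
  moreover have "|{b}| <o ?r"
  proof (rule finite_ordLess_infinite[OF card_of_Well_order _ _ inf])
    show "Well_order ?r" using co card_order_on_well_order_on by blast
    show "finite (Field |{b}| )" by (simp add: Field_card_of)
  qed
  ultimately have 1: "|underS ?r b \<union> {b}| <o ?r" by (rule card_of_Un_ordLess_infinite_Field[OF inf co])
  have 2: "underS ?r b \<union> {b} = {..b}" unfolding us by (rule t4)
  have lt: "|{..b}| <o ?r" using 1 unfolding 2 .
  have "|c ` {..b}| <o ?r" by (rule ordLeq_ordLess_trans[OF card_of_image lt])
  moreover have "cofinal (c ` {..b}) ?r"
    unfolding cofinal_def lam_rel_field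
  proof
    fix a
    from nb obtain x where "x \<le> b" "\<not> c x \<le> a" by auto
    then show "\<exists>y\<in>c ` {..b}. a \<noteq> y \<and> (a, y) \<in> ?r" unfolding lam_rel_def by auto
  qed
  moreover have "c ` {..b} \<subseteq> Field ?r" using lam_rel_field by auto
  ultimately have "|c ` {..b}| =o ?r" "|c ` {..b}| <o ?r" using reg unfolding regularCard_def by blast+
  then show False using not_ordLess_ordIso by blast
qed
lemma is_supD1: "is_sup S x \<Longrightarrow> s \<in> S \<Longrightarrow> s \<le> x" unfolding is_sup_def by blast
lemma is_supD2: "is_sup S x \<Longrightarrow> (\<And>s. s \<in> S \<Longrightarrow> s \<le> u) \<Longrightarrow> x \<le> u" unfolding is_sup_def by blast
lemma is_infD1: "is_inf S x \<Longrightarrow> s \<in> S \<Longrightarrow> x \<le> s" unfolding is_inf_def by blast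
lemma is_infD2: "is_inf S x \<Longrightarrow> (\<And>s. s \<in> S \<Longrightarrow> u \<le> s) \<Longrightarrow> u \<le> x" unfolding is_inf_def by blast

lemma ev_comp:
  fixes h :: "'l::wellorder \<Rightarrow> 'l"
  assumes "mono h" "\<forall>\<alpha>. \<exists>\<beta>. \<alpha> \<le> h \<beta>" "eventually P at_top"
  shows "eventually (\<lambda>\<beta>. P (h \<beta>)) at_top"
proof -
  obtain N where N: "\<forall>n\<ge>N. P n" using assms(3) unfolding eventually_at_top_linorder by blast
  obtain b where b: "N \<le> h b" using assms(2) by blast
  have "\<forall>n\<ge>b. P (h n)"
  proof (intro allI impI)
    fix n assume "b \<le> n"
    then have "h b \<le> h n" using assms(1) by (simp add: monoD)
    then show "P (h n)" using N b by auto
  qed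
  then show ?thesis unfolding eventually_at_top_linorder by blast
qed

lemma enum:
  fixes S :: "('l::wellorder) set"
  assumes "\<forall>\<alpha>. \<exists>\<beta>\<in>S. \<alpha> \<le> \<beta>"
  shows "\<exists>e. mono e \<and> (\<forall>\<alpha>. \<alpha> \<le> e \<alpha>) \<and> (\<forall>\<alpha>. e \<alpha> \<in> S)"
proof -
  define e where "e \<alpha> = (LEAST \<beta>. \<beta> \<in> S \<and> \<alpha> \<le> \<beta>)" for \<alpha>
  have P: "e \<alpha> \<in> S \<and> \<alpha> \<le> e \<alpha>" for \<alpha>
    unfolding e_def using assms by (metis (mono_tags, lifting) LeastI)
  have "mono e"
  proof (rule monoI)
    fix a b :: 'l assume "a \<le> b"
    then have "e b \<in> S \<and> a \<le> e b" using P order_trans by blast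
    then show "e a \<le> e b" unfolding e_def by (rule Least_le)
  qed
  then show ?thesis using P by blast
qed

lemma weak:
  fixes g :: "'l::wellorder \<Rightarrow> 'p::order"
  assumes "O_conv i g a"
  shows "\<exists>M N. is_sup M a \<and> is_inf N a \<and> (\<forall>m\<in>M. \<forall>n\<in>N. eventually (\<lambda>\<gamma>. m \<le> g \<gamma> \<and> g \<gamma> \<le> n) at_top)"
proof (cases "i = 1")
  case True
  then obtain y z where ev: "eventually (\<lambda>\<gamma>. y \<gamma> \<le> g \<gamma> \<and> g \<gamma> \<le> z \<gamma>) at_top"
    and my: "mono y" and sy: "is_sup (range y) a" and az: "antimono z" and iz: "is_inf (range z) a"
    using assms unfolding O_conv_def O1_conv_def by auto
  obtain N0 where N0: "\<forall>n\<ge>N0. y n \<le> g n \<and> g n \<le> z n" using ev unfolding eventually_at_top_linorder by blast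
  have "\<forall>m\<in>range y. \<forall>n\<in>range z. eventually (\<lambda>\<gamma>. m \<le> g \<gamma> \<and> g \<gamma> \<le> n) at_top"
  proof (intro ballI)
    fix m n assume "m \<in> range y" "n \<in> range z"
    then obtain a0 b0 where m: "m = y a0" and n: "n = z b0" by auto
    have "\<forall>k\<ge>max N0 (max a0 b0). m \<le> g k \<and> g k \<le> n"
    proof (intro allI impI)
      fix k assume k: "max N0 (max a0 b0) \<le> k"
      have "y a0 \<le> y k" using my k by (simp add: monoD)
      moreover have "z k \<le> z b0" using az k by (simp add: antimonoD)
      ultimately show "m \<le> g k \<and> g k \<le> n" using N0 k m n by (meson max.boundedE order_trans)
    qed
    then show "eventually (\<lambda>\<gamma>. m \<le> g \<gamma> \<and> g \<gamma> \<le> n) at_top"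
      unfolding eventually_at_top_linorder by blast
  qed
  then show ?thesis using sy iz by blast
next
  case False
  then show ?thesis using assms unfolding O_conv_def O2_conv_def O3_conv_def
    by (auto split: if_splits)
qed


definition nonext :: "nat \<Rightarrow> 'p::order \<Rightarrow> bool" where
  "nonext i z \<longleftrightarrow> (i = 1 \<or> i = 2) \<or> (\<not>(\<forall>u. u \<le> z) \<and> \<not>(\<forall>u. z \<le> u))"

lemma weak2:
  fixes g :: "'l::wellorder \<Rightarrow> 'p::order"
  assumes "O_conv i g a" "nonext i a"
  shows "\<exists>M N. M \<noteq> {} \<and> N \<noteq> {} \<and> is_sup M a \<and> is_inf N a \<and> (\<forall>m\<in>M. \<forall>n\<in>N. eventually (\<lambda>\<gamma>. m \<le> g \<gamma> \<and> g \<gamma> \<le> n) at_top)"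
proof (cases "i = 1 \<or> i = 2")
  case True
  then show ?thesis
  proof
    assume "i = 1"
    then obtain y z where ev: "eventually (\<lambda>\<gamma>. y \<gamma> \<le> g \<gamma> \<and> g \<gamma> \<le> z \<gamma>) at_top"
      and my: "mono y" and sy: "is_sup (range y) a" and az: "antimono z" and iz: "is_inf (range z) a"
      using assms unfolding O_conv_def O1_conv_def by auto
    obtain N0 where N0: "\<forall>n\<ge>N0. y n \<le> g n \<and> g n \<le> z n" using ev unfolding eventually_at_top_linorder by blast
    have "\<forall>m\<in>range y. \<forall>n\<in>range z. eventually (\<lambda>\<gamma>. m \<le> g \<gamma> \<and> g \<gamma> \<le> n) at_top"
    proof (intro ballI)
      fix m n assume "m \<in> range y" "n \<in> range z"
      then obtain a0 b0 where m: "m = y a0" and n: "n = z b0" by auto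
      have "\<forall>k\<ge>max N0 (max a0 b0). m \<le> g k \<and> g k \<le> n"
      proof (intro allI impI)
        fix k assume k: "max N0 (max a0 b0) \<le> k"
        have "y a0 \<le> y k" using my k by (simp add: monoD)
        moreover have "z k \<le> z b0" using az k by (simp add: antimonoD)
        ultimately show "m \<le> g k \<and> g k \<le> n" using N0 k m n by (meson max.boundedE order_trans)
      qed
      then show "eventually (\<lambda>\<gamma>. m \<le> g \<gamma> \<and> g \<gamma> \<le> n) at_top"
        unfolding eventually_at_top_linorder by blast
    qed
    note EV = this
    have ne: "range y \<noteq> {}" "range z \<noteq> {}" by auto
    show ?thesis
      apply (rule exI[of _ "range y"], rule exI[of _ "range z"])
      using ne sy iz EV by simp
  next
    assume i2: "i = 2"
    then obtain M N where MN: "directed_set M" "filtered_set N" "is_sup M a" "is_inf N a"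
      "\<forall>m\<in>M. \<forall>n\<in>N. eventually (\<lambda>\<gamma>. m \<le> g \<gamma> \<and> g \<gamma> \<le> n) at_top"
      using assms(1) unfolding O_conv_def O2_conv_def by auto
    have ne: "M \<noteq> {}" "N \<noteq> {}" using MN(1,2) unfolding directed_set_def filtered_set_def by simp_all
    show ?thesis
      apply (rule exI[of _ M], rule exI[of _ N])
      using ne MN(3,4,5) by simp
  qed
next
  case False
  then have na: "\<not>(\<forall>u. u \<le> a) \<and> \<not>(\<forall>u. a \<le> u)" using assms(2) unfolding nonext_def by auto
  obtain M N where MN: "is_sup M a" "is_inf N a" "\<forall>m\<in>M. \<forall>n\<in>N. eventually (\<lambda>\<gamma>. m \<le> g \<gamma> \<and> g \<gamma> \<le> n) at_top"
    using False assms(1) unfolding O_conv_def O3_conv_def by auto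
  have "M \<noteq> {}" using MN(1) na unfolding is_sup_def by auto
  moreover have "N \<noteq> {}" using MN(2) na unfolding is_inf_def by auto
  ultimately show ?thesis using MN by blast
qed

lemma ev_witness:
  fixes P :: "'l::wellorder \<Rightarrow> bool"
  assumes "eventually P at_top" shows "\<exists>n. P n"
  using assms unfolding eventually_at_top_linorder by blast

lemma uniq_le:
  fixes g :: "'l::wellorder \<Rightarrow> 'p::order"
  assumes "O_conv i g a" "O_conv i g b" "nonext i a" "nonext i b"
  shows "a \<le> b"
proof -
  obtain M1 N1 where 1: "N1 \<noteq> {}" "is_sup M1 a" "\<forall>m\<in>M1. \<forall>n\<in>N1. eventually (\<lambda>\<gamma>. m \<le> g \<gamma> \<and> g \<gamma> \<le> n) at_top"
    using weak2[OF assms(1,3)] by blast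
  obtain M2 N2 where 2: "M2 \<noteq> {}" "is_inf N2 b" "\<forall>m\<in>M2. \<forall>n\<in>N2. eventually (\<lambda>\<gamma>. m \<le> g \<gamma> \<and> g \<gamma> \<le> n) at_top"
    using weak2[OF assms(2,4)] by blast
  have le: "m \<le> n" if mn: "m \<in> M1" "n \<in> N2" for m n
  proof -
    obtain n1 where n1: "n1 \<in> N1" using 1(1) by auto
    obtain m2 where m2: "m2 \<in> M2" using 2(1) by auto
    have e1: "eventually (\<lambda>\<gamma>. m \<le> g \<gamma> \<and> g \<gamma> \<le> n1) at_top" using 1(3) mn n1 by blast
    have e2: "eventually (\<lambda>\<gamma>. m2 \<le> g \<gamma> \<and> g \<gamma> \<le> n) at_top" using 2(3) mn m2 by blast
    have "eventually (\<lambda>\<gamma>. (m \<le> g \<gamma> \<and> g \<gamma> \<le> n1) \<and> (m2 \<le> g \<gamma> \<and> g \<gamma> \<le> n)) at_top"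
      by (rule eventually_conj[OF e1 e2])
    then obtain k where "m \<le> g k \<and> g k \<le> n" using ev_witness by blast
    then show ?thesis by auto
  qed
  have "a \<le> n" if "n \<in> N2" for n using 1(2) le that unfolding is_sup_def by auto
  then show ?thesis using 2(2) unfolding is_inf_def by auto
qed

lemma uniq:
  fixes g :: "'l::wellorder \<Rightarrow> 'p::order"
  assumes "O_conv i g a" "O_conv i g b" "nonext i a" "nonext i b"
  shows "a = b"
  using uniq_le[OF assms] uniq_le[OF assms(2,1,4,3)] by auto

lemma const_conv: "O_conv i (\<lambda>_::'l::wellorder. c) (c::'p::order)"
proof -
  have s: "is_sup {c} c" "is_inf {c} c" unfolding is_sup_def is_inf_def by auto
  have d: "directed_set {c}" "filtered_set {c}" unfolding directed_set_def filtered_set_def by auto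
  have ev: "\<forall>m\<in>{c}. \<forall>n\<in>{c}. eventually (\<lambda>\<gamma>::'l. m \<le> c \<and> c \<le> n) at_top" by simp
  have "O1_conv (\<lambda>_::'l. c) c" unfolding O1_conv_def
    apply (rule exI[of _ "\<lambda>_. c"], rule exI[of _ "\<lambda>_. c"])
    using s by (auto simp: mono_def antimono_def image_def)
  moreover have "O2_conv (\<lambda>_::'l. c) c" unfolding O2_conv_def using s d ev by blast
  moreover have "O3_conv (\<lambda>_::'l. c) c" unfolding O3_conv_def using s ev by blast
  ultimately show ?thesis unfolding O_conv_def by auto
qed

lemma const_lim:
  assumes "O_conv i (\<lambda>_::'l::wellorder. c) (z::'p::order)" "nonext i z"
  shows "z = c"
proof -
  obtain M N where MN: "M \<noteq> {}" "N \<noteq> {}" "is_sup M z" "is_inf N z"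
    "\<forall>m\<in>M. \<forall>n\<in>N. eventually (\<lambda>\<gamma>::'l. m \<le> c \<and> c \<le> n) at_top"
    using weak2[OF assms] by blast
  have le: "m \<le> c \<and> c \<le> n" if "m \<in> M" "n \<in> N" for m n
    using ev_witness[of "\<lambda>\<gamma>::'l. m \<le> c \<and> c \<le> n"] MN(5) that by blast
  have "z \<le> c" using MN(1,2,3) le unfolding is_sup_def by blast
  moreover have "c \<le> z" using MN(1,2,4) le unfolding is_inf_def by blast
  ultimately show ?thesis by auto
qed

lemma sub:
  fixes g :: "'l::wellorder \<Rightarrow> 'p::order" and h :: "'l \<Rightarrow> 'l"
  assumes conv: "O_conv i g a" and mh: "mono h" and ch: "\<forall>\<alpha>. \<exists>\<beta>. \<alpha> \<le> h \<beta>"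
  shows "O_conv i (g \<circ> h) a"
proof (cases "i = 1")
  case True
  then obtain y z where ev: "eventually (\<lambda>\<gamma>. y \<gamma> \<le> g \<gamma> \<and> g \<gamma> \<le> z \<gamma>) at_top"
    and my: "mono y" and sy: "is_sup (range y) a" and az: "antimono z" and iz: "is_inf (range z) a"
    using conv unfolding O_conv_def O1_conv_def by auto
  have ev': "eventually (\<lambda>\<gamma>. (y \<circ> h) \<gamma> \<le> (g \<circ> h) \<gamma> \<and> (g \<circ> h) \<gamma> \<le> (z \<circ> h) \<gamma>) at_top"
    using ev_comp[OF mh ch ev] by simp
  have m1: "mono (y \<circ> h)" using my mh by (simp add: mono_def)
  have m2: "antimono (z \<circ> h)" using az mh by (simp add: mono_def antimono_def)
  have s1: "is_sup (range (y \<circ> h)) a"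
    unfolding is_sup_def
  proof (intro conjI allI impI ballI)
    fix s assume "s \<in> range (y \<circ> h)" then show "s \<le> a" using sy is_supD1 by fastforce
  next
    fix u assume u: "\<forall>s\<in>range (y \<circ> h). s \<le> u"
    have "\<forall>s\<in>range y. s \<le> u"
    proof
      fix s assume "s \<in> range y"
      then obtain c where c: "s = y c" by auto
      obtain b where "c \<le> h b" using ch by blast
      then have 1: "y c \<le> y (h b)" using my by (simp add: monoD)
      have "(y \<circ> h) b \<in> range (y \<circ> h)" by (rule rangeI)
      then have "(y \<circ> h) b \<le> u" using u by blast
      then have 2: "y (h b) \<le> u" by simp
      show "s \<le> u" unfolding c using order_trans[OF 1 2] .
    qed
    then show "a \<le> u" by (intro is_supD2[OF sy]) blast
  qed
  have s2: "is_inf (range (z \<circ> h)) a"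
    unfolding is_inf_def
  proof (intro conjI allI impI ballI)
    fix s assume "s \<in> range (z \<circ> h)" then show "a \<le> s" using iz is_infD1 by fastforce
  next
    fix u assume u: "\<forall>s\<in>range (z \<circ> h). u \<le> s"
    have "\<forall>s\<in>range z. u \<le> s"
    proof
      fix s assume "s \<in> range z"
      then obtain c where c: "s = z c" by auto
      obtain b where "c \<le> h b" using ch by blast
      then have 1: "z (h b) \<le> z c" using az by (simp add: antimonoD)
      have "(z \<circ> h) b \<in> range (z \<circ> h)" by (rule rangeI)
      then have "u \<le> (z \<circ> h) b" using u by blast
      then have 2: "u \<le> z (h b)" by simp
      show "u \<le> s" unfolding c using order_trans[OF 2 1] .
    qed
    then show "u \<le> a" by (intro is_infD2[OF iz]) blast
  qed
  have "O1_conv (g \<circ> h) a" unfolding O1_conv_def using ev' m1 m2 s1 s2 by blast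
  then show ?thesis using True unfolding O_conv_def by simp
next
  case False
  have evs: "eventually (\<lambda>\<gamma>. m \<le> (g \<circ> h) \<gamma> \<and> (g \<circ> h) \<gamma> \<le> n) at_top"
    if "eventually (\<lambda>\<gamma>. m \<le> g \<gamma> \<and> g \<gamma> \<le> n) at_top" for m n
    using ev_comp[OF mh ch that] by simp
  show ?thesis
  proof (cases "i = 2")
    case True
    then obtain M N where MN: "directed_set M \<and> filtered_set N \<and> is_sup M a \<and> is_inf N a
      \<and> (\<forall>m\<in>M. \<forall>n\<in>N. eventually (\<lambda>\<gamma>. m \<le> g \<gamma> \<and> g \<gamma> \<le> n) at_top)"
      using conv unfolding O_conv_def O2_conv_def by auto
    then have "\<forall>m\<in>M. \<forall>n\<in>N. eventually (\<lambda>\<gamma>. m \<le> (g \<circ> h) \<gamma> \<and> (g \<circ> h) \<gamma> \<le> n) at_top"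
      using evs by blast
    then have "O2_conv (g \<circ> h) a" unfolding O2_conv_def using MN by blast
    then show ?thesis using True unfolding O_conv_def by simp
  next
    case F2: False
    then obtain M N where MN: "is_sup M a \<and> is_inf N a
      \<and> (\<forall>m\<in>M. \<forall>n\<in>N. eventually (\<lambda>\<gamma>. m \<le> g \<gamma> \<and> g \<gamma> \<le> n) at_top)"
      using conv False unfolding O_conv_def O3_conv_def by auto
    then have "\<forall>m\<in>M. \<forall>n\<in>N. eventually (\<lambda>\<gamma>. m \<le> (g \<circ> h) \<gamma> \<and> (g \<circ> h) \<gamma> \<le> n) at_top"
      using evs by blast
    then have "O3_conv (g \<circ> h) a" unfolding O3_conv_def using MN by blast
    then show ?thesis using False F2 unfolding O_conv_def by simp
  qed
qed

lemma cof_comp: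
  fixes h k :: "'l::wellorder \<Rightarrow> 'l"
  assumes "mono h" "\<forall>\<alpha>. \<exists>\<beta>. \<alpha> \<le> h \<beta>" "mono k" "\<forall>\<alpha>. \<exists>\<beta>. \<alpha> \<le> k \<beta>"
  shows "mono (h \<circ> k) \<and> (\<forall>\<alpha>. \<exists>\<beta>. \<alpha> \<le> (h \<circ> k) \<beta>)"
proof
  show "mono (h \<circ> k)" using assms by (simp add: mono_def)
  show "\<forall>\<alpha>. \<exists>\<beta>. \<alpha> \<le> (h \<circ> k) \<beta>"
  proof
    fix a
    obtain b where b: "a \<le> h b" using assms(2) by blast
    obtain c where "b \<le> k c" using assms(4) by blast
    then have "h b \<le> h (k c)" using assms(1) by (simp add: monoD)
    then show "\<exists>c. a \<le> (h \<circ> k) c" using b by (metis comp_apply order_trans)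
  qed
qed

lemma pig:
  fixes g :: "'l::wellorder \<Rightarrow> 'a"
  assumes "finite (range g)"
  shows "\<exists>v. \<forall>\<alpha>. \<exists>\<beta>. \<alpha> \<le> \<beta> \<and> g \<beta> = v"
proof (rule ccontr)
  assume "\<not> ?thesis"
  then have "\<forall>v. \<exists>\<alpha>. \<forall>\<beta>. \<alpha> \<le> \<beta> \<longrightarrow> g \<beta> \<noteq> v" by blast
  then obtain C where C: "\<forall>v \<beta>. C v \<le> \<beta> \<longrightarrow> g \<beta> \<noteq> v" by metis
  let ?m = "Max (C ` range g)"
  have "C (g ?m) \<le> ?m" using assms by (intro Max_ge) auto
  then show False using C by blast
qed

lemma extract_mono:
  fixes k :: "'l::wellorder \<Rightarrow> 'l"
  assumes B: "\<And>b c. \<exists>u. \<forall>a\<le>(b::'l). c a \<le> (u::'l)"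
  shows "\<exists>\<gamma>::'l \<Rightarrow> 'l. mono \<gamma> \<and> (\<forall>\<alpha>. \<exists>\<beta>. \<alpha> \<le> \<gamma> \<beta>) \<and>
    ((\<exists>c. \<forall>\<alpha>. k (\<gamma> \<alpha>) = c) \<or> (mono (k \<circ> \<gamma>) \<and> (\<forall>\<alpha>. \<exists>\<beta>. \<alpha> \<le> k (\<gamma> \<beta>))))"
proof (cases "\<exists>b. \<forall>\<alpha>. k \<alpha> \<le> b")
  case True
  then obtain b where b: "\<forall>\<alpha>. k \<alpha> \<le> b" by blast
  have "\<exists>v. \<forall>\<alpha>. \<exists>\<beta>. \<alpha> \<le> \<beta> \<and> k \<beta> = v"
  proof (rule ccontr)
    assume "\<not> ?thesis"
    then have "\<forall>v. \<exists>\<alpha>. \<forall>\<beta>. \<alpha> \<le> \<beta> \<longrightarrow> k \<beta> \<noteq> v" by blast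
    then obtain C where C: "\<forall>v \<beta>. C v \<le> \<beta> \<longrightarrow> k \<beta> \<noteq> v" by metis
    obtain u where u: "\<forall>a\<le>b. C a \<le> u" using B by blast
    have "C (k u) \<le> u" using u b by blast
    then show False using C by blast
  qed
  then obtain v where "\<forall>\<alpha>. \<exists>\<beta>\<in>{\<beta>. k \<beta> = v}. \<alpha> \<le> \<beta>" by blast
  from enum[OF this] obtain e where e: "mono e" "\<forall>\<alpha>. \<alpha> \<le> e \<alpha>" "\<forall>\<alpha>. k (e \<alpha>) = v" by auto
  have ce: "\<forall>\<alpha>. \<exists>\<beta>. \<alpha> \<le> e \<beta>" using e(2) by blast
  show ?thesis
    apply (rule exI[of _ e])
    using e(1,3) ce by blast
next
  case False
  then have unb: "\<forall>b. \<exists>\<alpha>. b < k \<alpha>" by (meson not_le)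
  define D where "D = {\<delta>. \<forall>\<delta>'<\<delta>. k \<delta>' < k \<delta>}"
  have "\<forall>\<alpha>. \<exists>\<delta>\<in>D. \<alpha> \<le> \<delta>"
  proof
    fix a
    obtain u where u: "\<forall>a'\<le>a. k a' \<le> u" using B by blast
    obtain d where d: "u < k d" using unb by blast
    define d0 where "d0 = (LEAST d. u < k d)"
    have d0: "u < k d0" unfolding d0_def using d by (rule LeastI)
    have "d0 \<in> D" unfolding D_def
    proof (intro allI impI CollectI)
      fix d' assume "d' < d0"
      then have "\<not> u < k d'" unfolding d0_def by (rule not_less_Least)
      then show "k d' < k d0" using d0 by auto
    qed
    moreover have "a \<le> d0"
    proof (rule ccontr)
      assume "\<not> a \<le> d0"
      then have "d0 \<le> a" by auto
      then show False using u d0 by auto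
    qed
    ultimately show "\<exists>\<delta>\<in>D. a \<le> \<delta>" by blast
  qed
  from enum[OF this] obtain e where e: "mono e" "\<forall>\<alpha>. \<alpha> \<le> e \<alpha>" "\<forall>\<alpha>. e \<alpha> \<in> D" by auto
  have "mono (k \<circ> e)"
  proof (rule monoI)
    fix a b :: 'l assume "a \<le> b"
    then have "e a \<le> e b" using e(1) by (simp add: monoD)
    then have "e a = e b \<or> e a < e b" by auto
    then show "(k \<circ> e) a \<le> (k \<circ> e) b"
    proof
      assume "e a < e b"
      then show ?thesis using e(3) unfolding D_def by (auto intro: less_imp_le)
    qed auto
  qed
  moreover have "\<forall>\<alpha>. \<exists>\<beta>. \<alpha> \<le> k (e \<beta>)"
  proof
    fix a
    obtain d where d: "a < k d" using unb by blast
    have "d = e d \<or> d < e d" using e(2) by (auto simp: le_less)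
    then have "k d \<le> k (e d)"
    proof
      assume "d < e d" then show ?thesis using e(3) unfolding D_def by (auto intro: less_imp_le)
    qed auto
    then show "\<exists>\<beta>. a \<le> k (e \<beta>)" using d by (meson order_trans less_imp_le)
  qed
  ultimately show ?thesis using e by blast
qed

lemma union_closed:
  fixes L :: "'l::wellorder itself" and A B :: "'p::order set"
  assumes "O_lam_closed i L A" "O_lam_closed i L B"
  shows "O_lam_closed i L (A \<union> B)"
  unfolding O_lam_closed_def
proof (intro allI impI, elim conjE)
  fix g :: "'l \<Rightarrow> 'p" and z
  assume rg: "range g \<subseteq> A \<union> B" and cz: "O_conv i g z"
  show "z \<in> A \<union> B"
  proof (cases "\<forall>\<alpha>. \<exists>\<beta>\<in>{\<beta>. g \<beta> \<in> A}. \<alpha> \<le> \<beta>")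
    case True
    from enum[OF this] obtain e where e: "mono e" "\<forall>\<alpha>. \<alpha> \<le> e \<alpha>" "\<forall>\<alpha>. e \<alpha> \<in> {\<beta>. g \<beta> \<in> A}" by blast
    have "\<forall>\<alpha>. \<exists>\<beta>. \<alpha> \<le> e \<beta>" using e(2) by blast
    then have "O_conv i (g \<circ> e) z" using sub[OF cz e(1)] by blast
    moreover have "range (g \<circ> e) \<subseteq> A" using e(3) by auto
    ultimately have "z \<in> A" using assms(1) unfolding O_lam_closed_def by blast
    then show ?thesis by blast
  next
    case False
    then obtain a0 where a0: "\<forall>\<beta>. a0 \<le> \<beta> \<longrightarrow> g \<beta> \<notin> A" by auto
    have "\<forall>\<alpha>. \<exists>\<beta>\<in>{\<beta>. g \<beta> \<in> B}. \<alpha> \<le> \<beta>"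
    proof
      fix a
      have "g (max a a0) \<in> B" using a0 rg by (metis Un_iff max.cobounded2 range_subsetD)
      then show "\<exists>\<beta>\<in>{\<beta>. g \<beta> \<in> B}. a \<le> \<beta>" by force
    qed
    from enum[OF this] obtain e where e: "mono e" "\<forall>\<alpha>. \<alpha> \<le> e \<alpha>" "\<forall>\<alpha>. e \<alpha> \<in> {\<beta>. g \<beta> \<in> B}" by blast
    have "\<forall>\<alpha>. \<exists>\<beta>. \<alpha> \<le> e \<beta>" using e(2) by blast
    then have "O_conv i (g \<circ> e) z" using sub[OF cz e(1)] by blast
    moreover have "range (g \<circ> e) \<subseteq> B" using e(3) by auto
    ultimately have "z \<in> B" using assms(2) unfolding O_lam_closed_def by blast
    then show ?thesis by blast
  qed
qed

lemma istop: "istopology (\<lambda>U. O_lam_closed i (L :: 'l::wellorder itself) (- (U :: ('p::order) set)))"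
  unfolding istopology_def
proof (intro conjI allI impI)
  fix S T :: "'p set"
  assume "O_lam_closed i L (- S)" "O_lam_closed i L (- T)"
  then have "O_lam_closed i L (- S \<union> - T)" by (rule union_closed)
  then show "O_lam_closed i L (- (S \<inter> T))" by simp
next
  fix K :: "'p set set"
  assume K: "\<forall>U\<in>K. O_lam_closed i L (- U)"
  show "O_lam_closed i L (- \<Union> K)"
    unfolding O_lam_closed_def
  proof (intro allI impI, elim conjE)
    fix g :: "'l \<Rightarrow> 'p" and z
    assume rg: "range g \<subseteq> - \<Union> K" and cz: "O_conv i g z"
    have "z \<in> - U" if "U \<in> K" for U
      using K that rg cz unfolding O_lam_closed_def by blast
    then show "z \<in> - \<Union> K" by blast
  qed
qed

lemma openin_tau: "openin (tau_O i (L :: 'l::wellorder itself)) (U :: ('p::order) set) \<longleftrightarrow> O_lam_closed i L (- U)"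
  unfolding tau_O_def using topology_inverse'[OF istop] by metis

lemma fin_closed:
  fixes L :: "'l::wellorder itself" and F :: "'p::order set"
  assumes "finite F"
  shows "O_lam_closed i L (F \<union> {z. \<not> nonext i z})"
  unfolding O_lam_closed_def
proof (intro allI impI, elim conjE)
  fix g :: "'l \<Rightarrow> 'p" and z
  assume rg: "range g \<subseteq> F \<union> {z. \<not> nonext i z}" and cz: "O_conv i g z"
  show "z \<in> F \<union> {z. \<not> nonext i z}"
  proof (cases "nonext i z")
    case False then show ?thesis by blast
  next
    case nz: True
    have fe: "finite {z::'p. \<not> nonext i z}"
    proof -
      have "{z::'p. \<not> nonext i z} \<subseteq> {z. \<forall>u. u \<le> z} \<union> {z. \<forall>u. z \<le> u}" unfolding nonext_def by auto
      moreover have "finite {z::'p. \<forall>u. u \<le> z}"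
      proof (cases "{z::'p. \<forall>u. u \<le> z} = {}")
        case False
        then obtain t where t: "\<forall>u. u \<le> (t::'p)" by auto
        have "{z::'p. \<forall>u. u \<le> z} \<subseteq> {t}" using t by (auto intro: order.antisym)
        then show ?thesis using finite_subset by blast
      next
        case True then show ?thesis by (metis finite.emptyI)
      qed
      moreover have "finite {z::'p. \<forall>u. z \<le> u}"
      proof (cases "{z::'p. \<forall>u. z \<le> u} = {}")
        case False
        then obtain t where t: "\<forall>u. (t::'p) \<le> u" by auto
        have "{z::'p. \<forall>u. z \<le> u} \<subseteq> {t}" using t by (auto intro: order.antisym)
        then show ?thesis using finite_subset by blast
      next
        case True then show ?thesis by (metis finite.emptyI)
      qed
      ultimately show ?thesis using finite_subset by blast
    qed
    have "finite (range g)" using rg fe assms finite_subset by blast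
    from pig[OF this] obtain v where v: "\<forall>\<alpha>. \<exists>\<beta>. \<alpha> \<le> \<beta> \<and> g \<beta> = v" by blast
    then have "\<forall>\<alpha>. \<exists>\<beta>\<in>{\<beta>. g \<beta> = v}. \<alpha> \<le> \<beta>" by blast
    from enum[OF this] obtain e where e: "mono e" "\<forall>\<alpha>. \<alpha> \<le> e \<alpha>" "\<forall>\<alpha>. e \<alpha> \<in> {\<beta>. g \<beta> = v}" by blast
    have "\<forall>\<alpha>. \<exists>\<beta>. \<alpha> \<le> e \<beta>" using e(2) by blast
    then have "O_conv i (g \<circ> e) z" using sub[OF cz e(1)] by blast
    moreover have "g \<circ> e = (\<lambda>_. v)" using e(3) by auto
    ultimately have "z = v" using const_lim nz by metis
    moreover have "v \<in> range g" using v by blast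
    ultimately show ?thesis using rg by blast
  qed
qed

lemma closedK:
  fixes L :: "'l::wellorder itself" and f'' :: "'l \<Rightarrow> 'p::order" and Y :: "'p set"
  assumes B: "\<And>b c. \<exists>u. \<forall>a\<le>(b::'l). c a \<le> (u::'l)"
    and Yc: "O_lam_closed i L Y" and YE: "{z. \<not> nonext i z} \<subseteq> Y"
    and hY: "\<And>(h' :: 'l \<Rightarrow> 'l) z. mono h' \<Longrightarrow> (\<forall>\<alpha>. \<exists>\<beta>. \<alpha> \<le> h' \<beta>) \<Longrightarrow> O_conv i (f'' \<circ> h') z \<Longrightarrow> z \<in> Y"
  shows "O_lam_closed i L (range f'' \<union> Y)"
  unfolding O_lam_closed_def
proof (intro allI impI, elim conjE)
  fix g :: "'l \<Rightarrow> 'p" and z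
  assume rg: "range g \<subseteq> range f'' \<union> Y" and cz: "O_conv i g z"
  show "z \<in> range f'' \<union> Y"
  proof (cases "\<forall>\<alpha>. \<exists>\<beta>\<in>{\<beta>. g \<beta> \<in> Y}. \<alpha> \<le> \<beta>")
    case True
    from enum[OF this] obtain e where e: "mono e" "\<forall>\<alpha>. \<alpha> \<le> e \<alpha>" "\<forall>\<alpha>. e \<alpha> \<in> {\<beta>. g \<beta> \<in> Y}" by blast
    have "\<forall>\<alpha>. \<exists>\<beta>. \<alpha> \<le> e \<beta>" using e(2) by blast
    then have "O_conv i (g \<circ> e) z" using sub[OF cz e(1)] by blast
    moreover have "range (g \<circ> e) \<subseteq> Y" using e(3) by auto
    ultimately have "z \<in> Y" using Yc unfolding O_lam_closed_def by blast
    then show ?thesis by blast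
  next
    case False
    then obtain a0 where a0: "\<forall>\<beta>. a0 \<le> \<beta> \<longrightarrow> g \<beta> \<notin> Y" by auto
    have "\<forall>\<alpha>. \<exists>\<beta>\<in>{\<beta>. g \<beta> \<in> range f''}. \<alpha> \<le> \<beta>"
    proof
      fix a
      have "g (max a a0) \<in> range f''" using a0 rg by (metis Un_iff max.cobounded2 range_subsetD)
      then show "\<exists>\<beta>\<in>{\<beta>. g \<beta> \<in> range f''}. a \<le> \<beta>" by force
    qed
    from enum[OF this] obtain e where e: "mono e" "\<forall>\<alpha>. \<alpha> \<le> e \<alpha>" "\<forall>\<alpha>. e \<alpha> \<in> {\<beta>. g \<beta> \<in> range f''}" by blast
    have ce: "\<forall>\<alpha>. \<exists>\<beta>. \<alpha> \<le> e \<beta>" using e(2) by blast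
    define k where "k \<alpha> = (SOME j. g (e \<alpha>) = f'' j)" for \<alpha>
    have k: "g (e \<alpha>) = f'' (k \<alpha>)" for \<alpha>
    proof -
      have "\<exists>j. g (e \<alpha>) = f'' j" using e(3) by auto
      then show ?thesis unfolding k_def by (rule someI_ex)
    qed
    obtain \<gamma> :: "'l \<Rightarrow> 'l" where \<gamma>: "mono \<gamma>" "\<forall>\<alpha>. \<exists>\<beta>. \<alpha> \<le> \<gamma> \<beta>"
      "(\<exists>c. \<forall>\<alpha>. k (\<gamma> \<alpha>) = c) \<or> (mono (k \<circ> \<gamma>) \<and> (\<forall>\<alpha>. \<exists>\<beta>. \<alpha> \<le> k (\<gamma> \<beta>)))"
      using extract_mono[OF B, of k] by blast
    have c1: "O_conv i (g \<circ> e) z" using sub[OF cz e(1) ce] .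
    have c2: "O_conv i ((g \<circ> e) \<circ> \<gamma>) z" using sub[OF c1 \<gamma>(1,2)] .
    have eq: "(g \<circ> e) \<circ> \<gamma> = f'' \<circ> (k \<circ> \<gamma>)" using k by (auto simp: fun_eq_iff)
    from \<gamma>(3) show ?thesis
    proof
      assume "\<exists>c. \<forall>\<alpha>. k (\<gamma> \<alpha>) = c"
      then obtain c where c: "\<forall>\<alpha>. k (\<gamma> \<alpha>) = c" by blast
      have "(g \<circ> e) \<circ> \<gamma> = (\<lambda>_. f'' c)" using eq c by (auto simp: fun_eq_iff)
      then have cc: "O_conv i (\<lambda>_::'l. f'' c) z" using c2 by simp
      show ?thesis
      proof (cases "nonext i z")
        case True
        then have "z = f'' c" using const_lim[OF cc] by blast
        then show ?thesis by blast
      next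
        case False then show ?thesis using YE by blast
      qed
    next
      assume m: "mono (k \<circ> \<gamma>) \<and> (\<forall>\<alpha>. \<exists>\<beta>. \<alpha> \<le> k (\<gamma> \<beta>))"
      have "O_conv i (f'' \<circ> (k \<circ> \<gamma>)) z" using c2 eq by simp
      moreover have "\<forall>\<alpha>. \<exists>\<beta>. \<alpha> \<le> (k \<circ> \<gamma>) \<beta>" using m by simp
      ultimately have "z \<in> Y" using hY m by blast
      then show ?thesis by blast
    qed
  qed
qed

lemma main_lemma:
  fixes f' :: "'l::wellorder \<Rightarrow> 'p::order"
  assumes B: "\<And>b c. \<exists>u. \<forall>a\<le>(b::'l). c a \<le> (u::'l)"
    and conv: "\<And>K. O_lam_closed i TYPE('l) K \<Longrightarrow> x \<notin> K \<Longrightarrow> eventually (\<lambda>\<beta>. f' \<beta> \<notin> K) at_top"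
    and nx: "\<forall>\<beta>. f' \<beta> \<noteq> x" and xn: "nonext i x"
  shows "\<exists>h :: 'l \<Rightarrow> 'l. mono h \<and> (\<forall>\<alpha>. \<exists>\<beta>. \<alpha> \<le> h \<beta>) \<and> O_conv i (f' \<circ> h) x"
proof (rule ccontr)
  assume NOT: "\<not> ?thesis"
  let ?E = "{z::'p. \<not> nonext i z}"
  show False
  proof (cases "\<exists>(h0 :: 'l \<Rightarrow> 'l) y. mono h0 \<and> (\<forall>\<alpha>. \<exists>\<beta>. \<alpha> \<le> h0 \<beta>) \<and> nonext i y \<and> O_conv i (f' \<circ> h0) y")
    case True
    then obtain h0 :: "'l \<Rightarrow> 'l" and y where h0: "mono h0" "\<forall>\<alpha>. \<exists>\<beta>. \<alpha> \<le> h0 \<beta>" and y: "nonext i y" "O_conv i (f' \<circ> h0) y" by blast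
    have yx: "y \<noteq> x" using NOT h0 y by blast
    have Yc: "O_lam_closed i TYPE('l) ({y} \<union> ?E)" by (rule fin_closed) simp
    have "O_lam_closed i TYPE('l) (range (f' \<circ> h0) \<union> ({y} \<union> ?E))"
    proof (rule closedK[OF B Yc])
      show "?E \<subseteq> {y} \<union> ?E" by blast
      fix h' :: "'l \<Rightarrow> 'l" and z assume "mono h'" "\<forall>\<alpha>. \<exists>\<beta>. \<alpha> \<le> h' \<beta>" "O_conv i ((f' \<circ> h0) \<circ> h') z"
      moreover have "O_conv i ((f' \<circ> h0) \<circ> h') y" using sub[OF y(2)] calculation by blast
      ultimately show "z \<in> {y} \<union> ?E" using uniq y(1) by blast
    qed
    moreover have "x \<notin> range (f' \<circ> h0) \<union> ({y} \<union> ?E)" using nx yx xn by auto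
    ultimately have ev: "eventually (\<lambda>\<beta>. f' \<beta> \<notin> range (f' \<circ> h0) \<union> ({y} \<union> ?E)) at_top" by (rule conv)
    have "eventually (\<lambda>\<beta>. f' (h0 \<beta>) \<notin> range (f' \<circ> h0) \<union> ({y} \<union> ?E)) at_top"
      using ev_comp[OF h0 ev] .
    then obtain b where "f' (h0 b) \<notin> range (f' \<circ> h0) \<union> ({y} \<union> ?E)" using ev_witness by blast
    then show False by auto
  next
    case False
    have Yc: "O_lam_closed i TYPE('l) ({} \<union> ?E)" by (rule fin_closed) simp
    have "O_lam_closed i TYPE('l) (range f' \<union> ({} \<union> ?E))"
    proof (rule closedK[OF B Yc])
      show "?E \<subseteq> {} \<union> ?E" by blast
      fix h' :: "'l \<Rightarrow> 'l" and z assume "mono h'" "\<forall>\<alpha>. \<exists>\<beta>. \<alpha> \<le> h' \<beta>" "O_conv i (f' \<circ> h') z"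
      then show "z \<in> {} \<union> ?E" using False by blast
    qed
    moreover have "x \<notin> range f' \<union> ({} \<union> ?E)" using nx xn by auto
    ultimately have ev: "eventually (\<lambda>\<beta>. f' \<beta> \<notin> range f' \<union> ({} \<union> ?E)) at_top" by (rule conv)
    then obtain b where "f' b \<notin> range f' \<union> ({} \<union> ?E)" using ev_witness by blast
    then show False by auto
  qed
qed

theorem mainTheorem3:
  fixes f :: "'l::wellorder \<Rightarrow> 'p::order" and x :: 'p and i :: nat
  assumes "regular_cardinal_type TYPE('l)"
    and "i \<in> {1, 2, 3}"
    and "limitin (tau_O i TYPE('l)) f x at_top"
  shows "\<exists>h :: 'l \<Rightarrow> 'l. mono h \<and> (\<forall>\<alpha>. \<exists>\<beta>. \<alpha> \<le> h \<beta>) \<and> O_conv i (f \<circ> h) x"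
proof -
  have B: "\<And>b c. \<exists>u. \<forall>a\<le>(b::'l). c a \<le> (u::'l)" using bnd[OF assms(1)] by blast
  have lim: "\<And>U. openin (tau_O i TYPE('l)) U \<Longrightarrow> x \<in> U \<Longrightarrow> eventually (\<lambda>\<beta>. f \<beta> \<in> U) at_top"
    using assms(3) unfolding limitin_def by blast
  have cl: "eventually (\<lambda>\<beta>. f \<beta> \<notin> K) at_top" if "O_lam_closed i TYPE('l) K" "x \<notin> K" for K
  proof -
    have "openin (tau_O i TYPE('l)) (- K)" unfolding openin_tau using that(1) by simp
    then show ?thesis using lim[of "- K"] that(2) by simp
  qed
  show ?thesis
  proof (cases "nonext i x")
    case False
    then have i3: "i \<noteq> 1" "i \<noteq> 2" and ext: "(\<forall>u. u \<le> x) \<or> (\<forall>u. x \<le> u)" unfolding nonext_def by auto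
    have "O3_conv (f \<circ> id) x"
      unfolding O3_conv_def
    proof (cases "\<forall>u. u \<le> x")
      case True
      have "is_sup {x} x" "is_inf {} x" using True unfolding is_sup_def is_inf_def by auto
      then show "\<exists>M N. is_sup M x \<and> is_inf N x \<and> (\<forall>m\<in>M. \<forall>n\<in>N. eventually (\<lambda>\<gamma>. m \<le> (f \<circ> id) \<gamma> \<and> (f \<circ> id) \<gamma> \<le> n) at_top)"
        by blast
    next
      case False
      then have T: "\<forall>u. x \<le> u" using ext by blast
      have "is_sup {} x" "is_inf {x} x" using T unfolding is_sup_def is_inf_def by auto
      then show "\<exists>M N. is_sup M x \<and> is_inf N x \<and> (\<forall>m\<in>M. \<forall>n\<in>N. eventually (\<lambda>\<gamma>. m \<le> (f \<circ> id) \<gamma> \<and> (f \<circ> id) \<gamma> \<le> n) at_top)"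
        by blast
    qed
    then have "O_conv i (f \<circ> id) x" using i3 unfolding O_conv_def by simp
    moreover have "mono (id :: 'l \<Rightarrow> 'l)" by (simp add: mono_def)
    ultimately show ?thesis by fastforce
  next
    case xn: True
    show ?thesis
    proof (cases "\<forall>\<alpha>. \<exists>\<beta>\<in>{\<beta>. f \<beta> \<noteq> x}. \<alpha> \<le> \<beta>")
      case True
      from enum[OF this] obtain e where e: "mono e" "\<forall>\<alpha>. \<alpha> \<le> e \<alpha>" "\<forall>\<alpha>. e \<alpha> \<in> {\<beta>. f \<beta> \<noteq> x}" by blast
      have ce: "\<forall>\<alpha>. \<exists>\<beta>. \<alpha> \<le> e \<beta>" using e(2) by blast
      have conv': "eventually (\<lambda>\<beta>. (f \<circ> e) \<beta> \<notin> K) at_top" if "O_lam_closed i TYPE('l) K" "x \<notin> K" for K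
        using ev_comp[OF e(1) ce cl[OF that]] by simp
      have nx: "\<forall>\<beta>. (f \<circ> e) \<beta> \<noteq> x" using e(3) by simp
      have "\<exists>h :: 'l \<Rightarrow> 'l. mono h \<and> (\<forall>\<alpha>. \<exists>\<beta>. \<alpha> \<le> h \<beta>) \<and> O_conv i ((f \<circ> e) \<circ> h) x"
      proof (rule main_lemma[OF B])
        fix K assume "O_lam_closed i TYPE('l) K" "x \<notin> K"
        then show "eventually (\<lambda>\<beta>. (f \<circ> e) \<beta> \<notin> K) at_top" by (rule conv')
      next
        show "\<forall>\<beta>. (f \<circ> e) \<beta> \<noteq> x" by (rule nx)
      next
        show "nonext i x" by (rule xn)
      qed
      then obtain h :: "'l \<Rightarrow> 'l" where h: "mono h" "\<forall>\<alpha>. \<exists>\<beta>. \<alpha> \<le> h \<beta>" "O_conv i ((f \<circ> e) \<circ> h) x"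
        by blast
      have "mono (e \<circ> h) \<and> (\<forall>\<alpha>. \<exists>\<beta>. \<alpha> \<le> (e \<circ> h) \<beta>)" using cof_comp[OF e(1) ce h(1,2)] .
      moreover have "O_conv i (f \<circ> (e \<circ> h)) x" using h(3) by (simp add: comp_assoc)
      ultimately show ?thesis by blast
    next
      case False
      then obtain a0 where a0: "\<forall>\<beta>. a0 \<le> \<beta> \<longrightarrow> f \<beta> = x" by auto
      let ?h = "\<lambda>\<beta>. max \<beta> a0"
      have "mono ?h" by (auto simp: mono_def le_max_iff_disj)
      moreover have "\<forall>\<alpha>. \<exists>\<beta>. \<alpha> \<le> ?h \<beta>" by (meson max.cobounded1)
      moreover have fh: "f \<circ> ?h = (\<lambda>_. x)" using a0 by (auto simp: fun_eq_iff)
      moreover have "O_conv i (f \<circ> ?h) x" unfolding fh by (rule const_conv)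
      ultimately show ?thesis by blast
    qed
  qed
qed

end
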